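(* Let $\overline{\mathbf{x}}\in\mathcal{F}^R(\mathbf{s})$ be any feasible fractional flow, and let $\mathbf{x}^\bullet$ be the integral solution obtained by applying the rounding procedure $\texttt{PSRR}$ to each player's fractional flow $\overline{\mathbf{x}}_i$. Then, for $\beta>0$, with probability at least $1-\beta$, $$\phi(\mathbf{x}^\bullet)\le\phi(\overline{\mathbf{x}})+m(\gamma+1)\sqrt{2n\ln(m/\beta)}.$$
   Context: Routing game $\Gamma=(G,\ell,\mathbf{s})$: directed graph $G=(V,E)$, $m=|E|$, latencies $\ell_e$ non-decreasing, convex, twice differentiable, $\ell_e(n)\le n$, $\gamma$-Lipschitz; $n$ players with demands $s_i=(s_i^1,s_i^2)$. $\mathcal{F}^R(\mathbf{s})\subseteq[0,1]^{n\times m}$: each $\mathbf{x}_i$ is a fractional unit flow from $s_i^1$ to $s_i^2$. $\phi(\mathbf{x})=\frac1n\sum_i\sum_ex_{i,e}\ell_e(\sum_jx_{j,e})$. $\texttt{PSRR}(\overline{\mathbf{x}}_i)$: decompose $\overline{\mathbf{x}}_i$ into $s_i^1$-to-$s_i^2$ paths $P_j$ with weights $w_j$ (for each path, $w_j=\min_{e\in P_j}\overline x_{i,e}$, then subtract $w_j$ on the edges of $P_j$), sample a path $P$ with $\Pr[P=P_j]=w_j$ (independently across players), and set $x^\bullet_{i,e}=\mathbb{1}[e\in P]$. *)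

theory Defs
  imports "HOL-Probability.Probability"
begin

type_synonym 'v edge = "'v \<times> 'v"

definition latency :: "real \<Rightarrow> nat \<Rightarrow> (real \<Rightarrow> real) \<Rightarrow> bool" where
  "latency \<gamma> n l \<longleftrightarrow>
     (\<forall>x\<ge>0. 0 \<le> l x) \<and>
     mono_on {0..} l \<and>
     convex_on {0..} l \<and>
     (\<exists>l' l''. \<forall>x\<ge>0. (l has_real_derivative l' x) (at x within {0..}) \<and>
                        (l' has_real_derivative l'' x) (at x within {0..})) \<and>
     \<gamma>-lipschitz_on {0..} l \<and>
     l (real n) \<le> real n"

definition unit_flow :: "'v edge set \<Rightarrow> 'v \<Rightarrow> 'v \<Rightarrow> ('v edge \<Rightarrow> real) \<Rightarrow> bool" where
  "unit_flow E a b f \<longleftrightarrow>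
     (\<forall>e\<in>E. 0 \<le> f e \<and> f e \<le> 1) \<and>
     (\<forall>v. (\<Sum>e\<in>{e\<in>E. fst e = v}. f e) - (\<Sum>e\<in>{e\<in>E. snd e = v}. f e)
          = (if v = a then 1 else 0) - (if v = b then 1 else 0))"

definition feasible :: "'v edge set \<Rightarrow> nat \<Rightarrow> (nat \<Rightarrow> 'v \<times> 'v) \<Rightarrow> (nat \<Rightarrow> 'v edge \<Rightarrow> real) \<Rightarrow> bool" where
  "feasible E n s x \<longleftrightarrow> (\<forall>i<n. unit_flow E (fst (s i)) (snd (s i)) (x i))"

definition phi :: "'v edge set \<Rightarrow> ('v edge \<Rightarrow> real \<Rightarrow> real) \<Rightarrow> nat \<Rightarrow> (nat \<Rightarrow> 'v edge \<Rightarrow> real) \<Rightarrow> real" where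
  "phi E l n x = (1 / real n) * (\<Sum>i<n. \<Sum>e\<in>E. x i e * l e (\<Sum>j<n. x j e))"

definition is_path :: "'v edge set \<Rightarrow> 'v \<Rightarrow> 'v \<Rightarrow> 'v edge list \<Rightarrow> bool" where
  "is_path E a b P \<longleftrightarrow> (\<exists>vs. distinct vs \<and> length vs \<ge> 2 \<and> hd vs = a \<and> last vs = b \<and>
       P = zip vs (tl vs) \<and> set P \<subseteq> E)"

text \<open>The greedy path decomposition performed by PSRR: repeatedly pick an a-to-b path P in
  the support of the current flow, take w = min of the flow over the edges of P, subtract w
  on the edges of P, until no a-to-b path remains in the support.\<close>
inductive psrr_decomp :: "'v edge set \<Rightarrow> 'v \<Rightarrow> 'v \<Rightarrow> ('v edge \<Rightarrow> real) \<Rightarrow> ('v edge list \<times> real) list \<Rightarrow> bool"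
  for E a b where
  stop: "\<not> (\<exists>P. is_path {e\<in>E. f e > 0} a b P) \<Longrightarrow> psrr_decomp E a b f []"
| step: "is_path {e\<in>E. f e > 0} a b P \<Longrightarrow> w = Min (f ` set P) \<Longrightarrow>
         psrr_decomp E a b (\<lambda>e. if e \<in> set P then f e - w else f e) D \<Longrightarrow>
         psrr_decomp E a b f ((P, w) # D)"

text \<open>Probability that PSRR samples path P given the decomposition D.\<close>
definition path_weight :: "('v edge list \<times> real) list \<Rightarrow> 'v edge list \<Rightarrow> real" where
  "path_weight D P = sum_list (map snd (filter (\<lambda>(Q, w). Q = P) D))"

definition path_flow :: "(nat \<Rightarrow> 'v edge list) \<Rightarrow> nat \<Rightarrow> 'v edge \<Rightarrow> real" where
  "path_flow Q i e = (if e \<in> set (Q i) then 1 else 0)"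

end

theory Submission
  imports Defs
begin


lemma psrr_bound:
  assumes "psrr_decomp E a b f D" "0 \<le> f e"
  shows "sum_list (map snd (filter (\<lambda>(Q,w). e \<in> set Q) D)) \<le> f e"
  using assms
proof (induction arbitrary: rule: psrr_decomp.induct)
  case (stop f)
  then show ?case by simp
next
  case (step f P w D)
  show ?case
  proof (cases "e \<in> set P")
    case True
    have "w \<le> f e" using step.hyps(2) True by simp
    then have "0 \<le> f e - w" by simp
    with step.IH True have "sum_list (map snd (filter (\<lambda>(Q,w). e \<in> set Q) D)) \<le> f e - w" by simp
    then show ?thesis using True by simp
  next
    case False
    with step.IH step.prems show ?thesis by simp
  qed
qed

lemma sum_path_weight:
  "finite S \<Longrightarrow> (\<Sum>P\<in>S. path_weight D P) = sum_list (map snd (filter (\<lambda>(Q,w). Q \<in> S) D))"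
proof (induction D)
  case Nil
  then show ?case by (simp add: path_weight_def)
next
  case (Cons a D)
  obtain Q w where a: "a = (Q, w)" by force
  have "(\<Sum>P\<in>S. path_weight (a # D) P) = (\<Sum>P\<in>S. (if Q = P then w else 0) + path_weight D P)"
    by (intro sum.cong) (auto simp: path_weight_def a)
  also have "\<dots> = (\<Sum>P\<in>S. (if Q = P then w else 0)) + (\<Sum>P\<in>S. path_weight D P)"
    by (simp add: sum.distrib)
  also have "(\<Sum>P\<in>S. (if Q = P then w else 0)) = (if Q \<in> S then w else 0)"
    using Cons.prems by (simp add: sum.delta)
  finally show ?case using Cons by (simp add: a)
qed

lemma prob_edge:
  fixes p :: "'v edge list pmf"
  assumes "psrr_decomp E a b f D" "0 \<le> f e" "\<forall>P. pmf p P = path_weight D P"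
  shows "measure_pmf.prob p {P. e \<in> set P} \<le> f e"
proof -
  define F where "F = fst ` set D"
  have sub: "set_pmf p \<subseteq> F"
  proof
    fix P assume "P \<in> set_pmf p"
    then have "path_weight D P \<noteq> 0" using assms(3) by (simp add: set_pmf_eq)
    then have "filter (\<lambda>(Q, w). Q = P) D \<noteq> []" unfolding path_weight_def by auto
    then show "P \<in> F" unfolding F_def by (force simp: filter_empty_conv)
  qed
  define A where "A = {P. e \<in> set P} \<inter> F"
  have fin: "finite A" unfolding A_def F_def by simp
  have "measure_pmf.prob p {P. e \<in> set P} = measure_pmf.prob p ({P. e \<in> set P} \<inter> set_pmf p)"
    by (simp add: measure_Int_set_pmf)
  also have "{P. e \<in> set P} \<inter> set_pmf p = A \<inter> set_pmf p" using sub unfolding A_def by auto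
  also have "measure_pmf.prob p (A \<inter> set_pmf p) = measure_pmf.prob p A"
    by (simp add: measure_Int_set_pmf)
  also have "\<dots> = (\<Sum>P\<in>A. path_weight D P)"
    using fin assms(3) by (simp add: measure_measure_pmf_finite)
  also have "\<dots> = sum_list (map snd (filter (\<lambda>(Q,w). Q \<in> A) D))"
    using fin by (rule sum_path_weight)
  also have "filter (\<lambda>(Q,w). Q \<in> A) D = filter (\<lambda>(Q,w). e \<in> set Q) D"
    unfolding A_def F_def by (intro filter_cong) force+
  also have "sum_list (map snd \<dots>) \<le> f e" by (rule psrr_bound[OF assms(1,2)])
  finally show ?thesis .
qed

lemma edge_bound:
  fixes L Lb t \<gamma> :: real and n :: nat
  assumes lat: "latency \<gamma> n l" and "0 \<le> L" "L \<le> n" "0 \<le> Lb" "Lb \<le> n" "L \<le> Lb + t" "0 \<le> t"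
  shows "L * l L \<le> Lb * l Lb + n * t * (1 + \<gamma>)"
proof -
  from lat have nn: "\<And>x. x \<ge> 0 \<Longrightarrow> 0 \<le> l x" and mono: "mono_on {0..} l"
    and lip: "\<gamma>-lipschitz_on {0..} l" and ln: "l (real n) \<le> real n"
    unfolding latency_def by auto
  have g: "0 \<le> \<gamma>" using lip by (simp add: lipschitz_on_def)
  show ?thesis
  proof (cases "L \<le> Lb")
    case True
    have "l L \<le> l Lb" using mono True assms by (auto simp: mono_on_def)
    then have "L * l L \<le> Lb * l Lb" using True assms nn
      by (meson mult_mono)
    moreover have "0 \<le> n * t * (1 + \<gamma>)" using assms g by simp
    ultimately show ?thesis by linarith
  next
    case False
    have lL: "l L \<le> n" using mono assms ln by (auto simp: mono_on_def) (smt (verit) atLeast_iff)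
    have d: "l L - l Lb \<le> \<gamma> * (L - Lb)"
      using lip assms False by (auto simp: lipschitz_on_def dist_real_def) (smt (verit) atLeast_iff)
    have "L * l L - Lb * l Lb = (L - Lb) * l L + Lb * (l L - l Lb)" by (simp add: algebra_simps)
    also have "(L - Lb) * l L \<le> t * n"
      using False assms lL nn[of L] by (intro mult_mono) auto
    also have "Lb * (l L - l Lb) \<le> n * (\<gamma> * t)"
    proof (intro mult_mono)
      show "l L - l Lb \<le> \<gamma> * t" using d g assms
        by (smt (verit) mult_left_mono)
      show "0 \<le> l L - l Lb" using mono assms False by (auto simp: mono_on_def)
    qed (use assms g in auto)
    finally show ?thesis by (simp add: algebra_simps)
  qed
qed

lemma phi_swap:
  "phi E l n x = (1 / real n) * (\<Sum>e\<in>E. (\<Sum>i<n. x i e) * l e (\<Sum>j<n. x j e))"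
  unfolding phi_def by (subst sum.swap) (simp add: sum_distrib_right)

theorem lemma4p8:
  fixes E :: "'v edge set" and l :: "'v edge \<Rightarrow> real \<Rightarrow> real" and \<gamma> :: real
    and n :: nat and s :: "nat \<Rightarrow> 'v \<times> 'v" and xbar :: "nat \<Rightarrow> 'v edge \<Rightarrow> real"
    and D :: "nat \<Rightarrow> ('v edge list \<times> real) list" and p :: "nat \<Rightarrow> 'v edge list pmf"
    and \<beta> :: real
  assumes "finite E"
    and "\<forall>e\<in>E. latency \<gamma> n (l e)"
    and "\<forall>i<n. fst (s i) \<noteq> snd (s i)"
    and "feasible E n s xbar"
    and "\<forall>i<n. psrr_decomp E (fst (s i)) (snd (s i)) (xbar i) (D i)"
    and "\<forall>i<n. \<forall>P. pmf (p i) P = path_weight (D i) P"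
    and "\<beta> > 0"
  shows "measure_pmf.prob (Pi_pmf {..<n} [] p)
           {Q. phi E l n (path_flow Q) \<le> phi E l n xbar
                 + real (card E) * (\<gamma> + 1) * sqrt (2 * real n * ln (real (card E) / \<beta>))}
         \<ge> 1 - \<beta>"
proof -
  define M where "M = Pi_pmf {..<n} [] p"
  define m where "m = card E"
  define t where "t = sqrt (2 * real n * ln (real m / \<beta>))"
  define G where "G = {Q. phi E l n (path_flow Q) \<le> phi E l n xbar + real m * (\<gamma> + 1) * t}"
  have goal: "measure_pmf.prob M G \<ge> 1 - \<beta>"
  proof (cases "n = 0 \<or> \<beta> \<ge> 1")
    case True
    then show ?thesis
    proof
      assume "n = 0"
      then have "G = UNIV" unfolding G_def t_def by (simp add: phi_def)
      then show ?thesis using assms by simp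
    next
      assume "\<beta> \<ge> 1" then show ?thesis by (smt (verit) measure_nonneg)
    qed
  next
    case False
    then have n: "n > 0" and b1: "\<beta> < 1" by auto
    have Ene: "E \<noteq> {}"
    proof
      assume "E = {}"
      have "unit_flow E (fst (s 0)) (snd (s 0)) (xbar 0)" using assms(4) n by (simp add: feasible_def)
      then have "(\<Sum>e\<in>{e\<in>E. fst e = fst (s 0)}. xbar 0 e) - (\<Sum>e\<in>{e\<in>E. snd e = fst (s 0)}. xbar 0 e)
          = (if fst (s 0) = fst (s 0) then 1 else 0) - (if fst (s 0) = snd (s 0) then 1 else 0)"
        unfolding unit_flow_def by blast
      then show False using \<open>E = {}\<close> assms(3) n by simp
    qed
    then have m1: "real m \<ge> 1" using assms(1) unfolding m_def by (simp add: Suc_leI card_gt_0_iff)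
    have "1 < real m / \<beta>" using m1 b1 assms(7) by (simp add: field_simps)
    then have lnpos: "ln (real m / \<beta>) > 0" by simp
    have t0: "t \<ge> 0" unfolding t_def using lnpos by simp
    have t2: "t\<^sup>2 = 2 * real n * ln (real m / \<beta>)" unfolding t_def using lnpos by simp
    define X where "X = (\<lambda>e i (Q::nat \<Rightarrow> 'v edge list). path_flow Q i e)"
    define \<mu> where "\<mu> = (\<lambda>e. \<Sum>i\<in>{..<n}. measure_pmf.expectation M (X e i))"
    define B where "B = (\<lambda>e. {Q. (\<Sum>i\<in>{..<n}. X e i Q) \<ge> \<mu> e + t})"
    have hoeff: "measure_pmf.prob M (B e) \<le> \<beta> / real m" for e
    proof -
      interpret H: Hoeffding_ineq "measure_pmf M" "{..<n}" "X e" "\<lambda>_. 0" "\<lambda>_. 1" "\<mu> e"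
      proof unfold_locales
        show "prob_space.indep_vars (measure_pmf M) (\<lambda>_. borel) (X e) {..<n}"
          unfolding M_def X_def path_flow_def
          by (intro prob_space.indep_vars_compose2[OF _ indep_vars_Pi_pmf])
             (auto simp: measure_pmf.prob_space_axioms)
      qed (auto simp: \<mu>_def X_def path_flow_def)
      have "measure_pmf.prob M (B e) \<le> exp (-2 * t\<^sup>2 / (\<Sum>i\<in>{..<n}. (1 - 0)\<^sup>2))"
        using H.Hoeffding_ineq_ge[OF t0] n unfolding B_def by simp
      also have "\<dots> = exp (- 4 * ln (real m / \<beta>))" using n t2 by simp
      also have "\<dots> \<le> exp (- ln (real m / \<beta>))" using lnpos by simp
      also have "\<dots> = \<beta> / real m" using m1 assms(7) by (simp add: ln_div exp_diff)
      finally show ?thesis .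
    qed
    have good: "Q \<in> G" if Q: "Q \<notin> (\<Union>e\<in>E. B e)" for Q
    proof -
      have "(\<Sum>i<n. path_flow Q i e) * l e (\<Sum>j<n. path_flow Q j e)
            \<le> (\<Sum>i<n. xbar i e) * l e (\<Sum>j<n. xbar j e) + real n * t * (1 + \<gamma>)" if e: "e \<in> E" for e
      proof (rule edge_bound)
        show "latency \<gamma> n (l e)" using assms(2) e by blast
        have uf: "\<And>i. i < n \<Longrightarrow> 0 \<le> xbar i e \<and> xbar i e \<le> 1"
          using assms(4) e unfolding feasible_def unit_flow_def by blast
        show "0 \<le> (\<Sum>i<n. path_flow Q i e)" by (auto intro!: sum_nonneg simp: path_flow_def)
        have "(\<Sum>i<n. path_flow Q i e) \<le> (\<Sum>i<n. 1)" by (intro sum_mono) (simp add: path_flow_def)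
        then show "(\<Sum>i<n. path_flow Q i e) \<le> real n" by simp
        show "0 \<le> (\<Sum>i<n. xbar i e)" using uf by (auto intro!: sum_nonneg)
        have "(\<Sum>i<n. xbar i e) \<le> (\<Sum>i<n. 1)" using uf by (intro sum_mono) auto
        then show "(\<Sum>i<n. xbar i e) \<le> real n" by simp
        have exp: "measure_pmf.expectation M (X e i) \<le> xbar i e" if i: "i < n" for i
        proof -
          have "measure_pmf.expectation M (X e i)
                = measure_pmf.expectation (map_pmf (\<lambda>f. f i) M) (indicator {P. e \<in> set P})"
            unfolding X_def path_flow_def integral_map_pmf by (simp only: indicator_def mem_Collect_eq of_bool_def)
          also have "map_pmf (\<lambda>f. f i) M = p i" unfolding M_def using i by (simp add: Pi_pmf_component)
          also have "measure_pmf.expectation (p i) (indicator {P. e \<in> set P}) = measure_pmf.prob (p i) {P. e \<in> set P}"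
            by simp
          also have "\<dots> \<le> xbar i e" using prob_edge[of E "fst (s i)" "snd (s i)" "xbar i" "D i" e "p i"] assms(5,6) uf i by auto
          finally show ?thesis .
        qed
        have "\<mu> e \<le> (\<Sum>i<n. xbar i e)" unfolding \<mu>_def using exp by (intro sum_mono) auto
        moreover have "(\<Sum>i<n. X e i Q) < \<mu> e + t" using Q e unfolding B_def by auto
        ultimately show "(\<Sum>i<n. path_flow Q i e) \<le> (\<Sum>i<n. xbar i e) + t" unfolding X_def by simp
        show "0 \<le> t" by (rule t0)
      qed
      then have "(\<Sum>e\<in>E. (\<Sum>i<n. path_flow Q i e) * l e (\<Sum>j<n. path_flow Q j e))
            \<le> (\<Sum>e\<in>E. (\<Sum>i<n. xbar i e) * l e (\<Sum>j<n. xbar j e) + real n * t * (1 + \<gamma>))"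
        by (intro sum_mono) auto
      also have "\<dots> = (\<Sum>e\<in>E. (\<Sum>i<n. xbar i e) * l e (\<Sum>j<n. xbar j e)) + real m * (real n * t * (1 + \<gamma>))"
        by (simp add: sum.distrib m_def)
      finally have "(1 / real n) * (\<Sum>e\<in>E. (\<Sum>i<n. path_flow Q i e) * l e (\<Sum>j<n. path_flow Q j e))
          \<le> (1 / real n) * ((\<Sum>e\<in>E. (\<Sum>i<n. xbar i e) * l e (\<Sum>j<n. xbar j e)) + real m * (real n * t * (1 + \<gamma>)))"
        using n by (intro mult_left_mono) auto
      also have "\<dots> = (1 / real n) * (\<Sum>e\<in>E. (\<Sum>i<n. xbar i e) * l e (\<Sum>j<n. xbar j e)) + real m * (\<gamma> + 1) * t"
        using n by (simp add: field_simps)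
      finally show ?thesis unfolding G_def by (simp add: phi_swap)
    qed
    have "measure_pmf.prob M (\<Union>e\<in>E. B e) \<le> (\<Sum>e\<in>E. measure_pmf.prob M (B e))"
      by (rule measure_pmf.finite_measure_subadditive_finite) (use assms(1) in auto)
    also have "\<dots> \<le> (\<Sum>e\<in>E. \<beta> / real m)" by (intro sum_mono hoeff)
    also have "\<dots> = \<beta>" using m1 unfolding m_def by simp
    finally have bad: "measure_pmf.prob M (\<Union>e\<in>E. B e) \<le> \<beta>" .
    have "measure_pmf.prob M (UNIV - (\<Union>e\<in>E. B e)) \<le> measure_pmf.prob M G"
      using good by (intro measure_pmf.finite_measure_mono) auto
    moreover have "measure_pmf.prob M (UNIV - (\<Union>e\<in>E. B e)) = 1 - measure_pmf.prob M (\<Union>e\<in>E. B e)"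
      using measure_pmf.prob_compl[of "\<Union>e\<in>E. B e" M] by simp
    ultimately show ?thesis using bad by linarith
  qed
  then show ?thesis unfolding M_def G_def t_def m_def .
qed

end
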